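(* For all $b,b'\in\overline{\mathbb{Q}}\setminus\{0,1\}$ and any choices of nonzero logarithms $\ln b,\ln b'$ used to define $b^x$ and $b'^x$, one has $EL^{(b)}=EL^{(b')}$.
   Context: For $b\in\mathbb{C}\setminus\{0,1\}$ fix a value $\ln b$ (nonzero) of the logarithm and define $b^x:=e^{x\ln b}$. For $S\subseteq\mathbb{C}$ let $b^{S}=\{b^x:x\in S\}$ and $\mathrm{Log}_b(S)=\{w: b^w\in S\}$. $\overline{F}$ is the algebraic closure in $\mathbb{C}$ of a field $F$; $\overline{\mathbb{Q}}$ is the field of algebraic numbers. Define $EL_0:=\mathbb{Q}$, $EL_n:=\overline{EL_{n-1}\big(b^{EL_{n-1}},\mathrm{Log}_b(EL_{n-1})\big)}$, $EL^{(b)}:=\bigcup_{n\ge0}EL_n$; equivalently the smallest algebraically closed subfield $F\subseteq\mathbb{C}$ with $x\in F\iff b^x\in F$. *)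

theory Defs
  imports Complex_Main "HOL-Computational_Algebra.Polynomial"
begin

definition subfield_C :: "complex set \<Rightarrow> bool" where
  "subfield_C F \<longleftrightarrow> 0 \<in> F \<and> 1 \<in> F \<and>
     (\<forall>x\<in>F. \<forall>y\<in>F. x + y \<in> F \<and> x - y \<in> F \<and> x * y \<in> F) \<and>
     (\<forall>x\<in>F. x \<noteq> 0 \<longrightarrow> inverse x \<in> F)"

definition field_gen :: "complex set \<Rightarrow> complex set" where
  "field_gen S = \<Inter>{F. subfield_C F \<and> S \<subseteq> F}"

definition alg_closure_C :: "complex set \<Rightarrow> complex set" where
  "alg_closure_C F = {z. \<exists>p :: complex poly. p \<noteq> 0 \<and> (\<forall>i. coeff p i \<in> F) \<and> poly p z = 0}"

text \<open>Exponentiation with base b, where L is the fixed value of ln b: b^x = e^(x L).\<close>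
definition bpow :: "complex \<Rightarrow> complex \<Rightarrow> complex" where
  "bpow L x = exp (x * L)"

definition bpow_set :: "complex \<Rightarrow> complex set \<Rightarrow> complex set" where
  "bpow_set L S = bpow L ` S"

definition Log_set :: "complex \<Rightarrow> complex set \<Rightarrow> complex set" where
  "Log_set L S = {w. bpow L w \<in> S}"

fun EL_n :: "complex \<Rightarrow> nat \<Rightarrow> complex set" where
  "EL_n L 0 = \<rat>"
| "EL_n L (Suc n) = alg_closure_C (field_gen (EL_n L n \<union> bpow_set L (EL_n L n) \<union> Log_set L (EL_n L n)))"

definition EL :: "complex \<Rightarrow> complex set" where
  "EL L = (\<Union>n. EL_n L n)"

end

theory Submission
  imports Defs
begin

lemma subfield_field_gen: "subfield_C (field_gen S)"
  unfolding field_gen_def subfield_C_def by auto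

lemma field_gen_sub: "S \<subseteq> field_gen S"
  unfolding field_gen_def by auto

lemma field_gen_least: "subfield_C F \<Longrightarrow> S \<subseteq> F \<Longrightarrow> field_gen S \<subseteq> F"
  unfolding field_gen_def by auto

lemma alg_closure_sup:
  assumes "subfield_C F" shows "F \<subseteq> alg_closure_C F"
proof
  fix z assume z: "z \<in> F"
  have c: "coeff [:-z,1:] i \<in> F" for i
    using assms z unfolding subfield_C_def
    by (cases i) (auto simp: coeff_pCons split: nat.split)
  have "[:-z,1:] \<noteq> (0::complex poly)" by simp
  moreover have "poly [:-z,1:] z = 0" by simp
  ultimately show "z \<in> alg_closure_C F" unfolding alg_closure_C_def using c by blast
qed

lemma alg_closure_mono: "A \<subseteq> B \<Longrightarrow> alg_closure_C A \<subseteq> alg_closure_C B"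
  unfolding alg_closure_C_def by blast

abbreviation G where
  "G L k \<equiv> field_gen (EL_n L k \<union> bpow_set L (EL_n L k) \<union> Log_set L (EL_n L k))"

lemma G_E: "G L k \<subseteq> EL_n L (Suc k)"
proof -
  have "G L k \<subseteq> alg_closure_C (G L k)" by (rule alg_closure_sup[OF subfield_field_gen])
  then show ?thesis by (simp only: EL_n.simps)
qed

lemma E_G: "EL_n L k \<subseteq> G L k"
  by (rule subset_trans[OF _ field_gen_sub]) (rule Un_upper1[THEN subset_trans[OF _ Un_upper1]])

lemma E_Suc: "EL_n L k \<subseteq> EL_n L (Suc k)"
  using E_G G_E by blast

lemma E_mono: assumes "k \<le> m" shows "EL_n L k \<subseteq> EL_n L m"
  using lift_Suc_mono_le[of "EL_n L", OF E_Suc assms] .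

lemma E_ops:
  assumes "x \<in> EL_n L k" "y \<in> EL_n L k"
  shows "x + y \<in> EL_n L (Suc k)" "x - y \<in> EL_n L (Suc k)" "x * y \<in> EL_n L (Suc k)"
    "x \<noteq> 0 \<Longrightarrow> inverse x \<in> EL_n L (Suc k)"
proof -
  have s: "subfield_C (G L k)" by (rule subfield_field_gen)
  have "x \<in> G L k" "y \<in> G L k" using assms E_G by blast+
  then have "x + y \<in> G L k" "x - y \<in> G L k" "x * y \<in> G L k" "x \<noteq> 0 \<Longrightarrow> inverse x \<in> G L k"
    using s unfolding subfield_C_def by auto
  then show "x + y \<in> EL_n L (Suc k)" "x - y \<in> EL_n L (Suc k)" "x * y \<in> EL_n L (Suc k)"
    "x \<noteq> 0 \<Longrightarrow> inverse x \<in> EL_n L (Suc k)" using G_E by blast+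
qed

lemma EL_two:
  assumes "x \<in> EL L" "y \<in> EL L"
  obtains k where "x \<in> EL_n L k" "y \<in> EL_n L k"
proof -
  obtain i j where "x \<in> EL_n L i" "y \<in> EL_n L j" using assms unfolding EL_def by blast
  then have "x \<in> EL_n L (max i j)" "y \<in> EL_n L (max i j)"
    using E_mono[of i "max i j" L] E_mono[of j "max i j" L] by auto
  then show ?thesis using that by blast
qed

lemma EL_subfield: "subfield_C (EL L)"
proof -
  have sub: "\<And>k. EL_n L k \<subseteq> EL L" unfolding EL_def by blast
  have "0 \<in> EL_n L 0" "1 \<in> EL_n L 0" by simp_all
  then have z: "0 \<in> EL L" "1 \<in> EL L" using sub[of 0] by (meson subsetD)+
  have ops: "x + y \<in> EL L \<and> x - y \<in> EL L \<and> x * y \<in> EL L"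
    if xy: "x \<in> EL L" "y \<in> EL L" for x y
  proof -
    obtain k where kk: "x \<in> EL_n L k" "y \<in> EL_n L k" using EL_two[OF xy] by blast
    have "x + y \<in> EL_n L (Suc k)" "x - y \<in> EL_n L (Suc k)" "x * y \<in> EL_n L (Suc k)"
      using E_ops(1-3)[OF kk] by auto
    then show ?thesis using sub[of "Suc k"] by (meson subsetD)
  qed
  have inv: "inverse x \<in> EL L" if xx: "x \<in> EL L" "x \<noteq> 0" for x
  proof -
    obtain k where "x \<in> EL_n L k" using xx unfolding EL_def by blast
    then have "inverse x \<in> EL_n L (Suc k)" using E_ops(4)[of x L k x] xx(2) by simp
    then show ?thesis using sub[of "Suc k"] by (meson subsetD)
  qed
  show ?thesis unfolding subfield_C_def
  proof (intro conjI ballI impI)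
    show "0 \<in> EL L" "1 \<in> EL L" by (fact z(1), fact z(2))
  next
    fix x y assume a: "x \<in> EL L" "y \<in> EL L"
    have o: "x + y \<in> EL L \<and> x - y \<in> EL L \<and> x * y \<in> EL L" by (rule ops[OF a])
    from o show "x + y \<in> EL L" by (rule conjunct1)
    from o show "x - y \<in> EL L" by (meson conjunct1 conjunct2)
    from o show "x * y \<in> EL L" by (meson conjunct2)
  next
    fix x assume "x \<in> EL L" "x \<noteq> 0"
    then show "inverse x \<in> EL L" by (rule inv)
  qed
qed

lemma EL_bpow: "x \<in> EL L \<Longrightarrow> bpow L x \<in> EL L"
proof -
  assume "x \<in> EL L"
  then obtain k where "x \<in> EL_n L k" unfolding EL_def by blast
  then have "bpow L x \<in> bpow_set L (EL_n L k)" unfolding bpow_set_def by blast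
  then show ?thesis using field_gen_sub[of "EL_n L k \<union> bpow_set L (EL_n L k) \<union> Log_set L (EL_n L k)"] G_E[of L k] unfolding EL_def by blast
qed

lemma EL_Log: "bpow L w \<in> EL L \<Longrightarrow> w \<in> EL L"
proof -
  assume "bpow L w \<in> EL L"
  then obtain k where "bpow L w \<in> EL_n L k" unfolding EL_def by blast
  then have "w \<in> Log_set L (EL_n L k)" unfolding Log_set_def by blast
  then show ?thesis using field_gen_sub[of "EL_n L k \<union> bpow_set L (EL_n L k) \<union> Log_set L (EL_n L k)"] G_E[of L k] unfolding EL_def by blast
qed

lemma coeffs_bounded:
  assumes "\<forall>i. coeff p i \<in> EL L"
  shows "\<exists>k. \<forall>i\<le>d. coeff p i \<in> EL_n L k"
proof (induction d)
  case 0
  then show ?case using assms unfolding EL_def by auto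
next
  case (Suc d)
  then obtain k where k: "\<forall>i\<le>d. coeff p i \<in> EL_n L k" by blast
  obtain j where j: "coeff p (Suc d) \<in> EL_n L j" using assms unfolding EL_def by blast
  have "\<forall>i\<le>Suc d. coeff p i \<in> EL_n L (max k j)"
  proof (intro allI impI)
    fix i assume "i \<le> Suc d"
    then consider "i \<le> d" | "i = Suc d" by linarith
    then show "coeff p i \<in> EL_n L (max k j)"
    proof cases
      case 1
      then have "coeff p i \<in> EL_n L k" using k by blast
      then show ?thesis using E_mono[of k "max k j" L] by (meson max.cobounded1 subsetD)
    next
      case 2
      then show ?thesis using j E_mono[of j "max k j" L] by (meson max.cobounded2 subsetD)
    qed
  qed
  then show ?case by blast
qed

lemma EL_alg: "alg_closure_C (EL L) \<subseteq> EL L"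
proof
  fix z assume "z \<in> alg_closure_C (EL L)"
  then obtain p where p: "p \<noteq> 0" "\<forall>i. coeff p i \<in> EL L" "poly p z = 0"
    unfolding alg_closure_C_def by blast
  obtain k where k: "\<forall>i\<le>degree p. coeff p i \<in> EL_n L k" using coeffs_bounded[OF p(2)] by blast
  have "coeff p i \<in> EL_n L k" for i
  proof (cases "i \<le> degree p")
    case False
    then have "coeff p i = 0" by (simp add: coeff_eq_0)
    moreover have "0 \<in> EL_n L k" using E_mono[of 0 k L] by auto
    ultimately show ?thesis by simp
  qed (use k in auto)
  then have "coeff p i \<in> G L k" for i using E_G by blast
  then have "z \<in> alg_closure_C (G L k)" using p unfolding alg_closure_C_def by blast
  then have "z \<in> EL_n L (Suc k)" by (simp only: EL_n.simps)
  then show "z \<in> EL L" unfolding EL_def by blast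
qed

lemma EL_minimal:
  assumes sf: "subfield_C F" and ac: "alg_closure_C F \<subseteq> F" and q: "\<rat> \<subseteq> F"
    and bp: "\<And>x. x \<in> F \<Longrightarrow> bpow L x \<in> F"
    and lg: "\<And>w. bpow L w \<in> F \<Longrightarrow> w \<in> F"
  shows "EL_n L n \<subseteq> F"
proof (induction n)
  case 0 then show ?case using q by simp
next
  case (Suc n)
  have "EL_n L n \<union> bpow_set L (EL_n L n) \<union> Log_set L (EL_n L n) \<subseteq> F"
    using Suc bp lg unfolding bpow_set_def Log_set_def by blast
  then have "G L n \<subseteq> F" using field_gen_least[OF sf] by blast
  then have "alg_closure_C (G L n) \<subseteq> F" using alg_closure_mono[of "G L n" F] ac by blast
  then show ?case by (simp only: EL_n.simps)
qed

lemma EL_sub: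
  fixes b L L' :: complex
  assumes "algebraic b" "exp L = b" "L' \<noteq> 0" "L \<noteq> 0"
  shows "EL L \<subseteq> EL L'"
proof -
  define F where "F = EL L'"
  have sf: "subfield_C F" unfolding F_def by (rule EL_subfield)
  have q: "\<rat> \<subseteq> F" unfolding F_def EL_def using EL_n.simps(1)[of L'] by blast
  obtain p where p: "\<forall>i. coeff p i \<in> \<int>" "p \<noteq> 0" "poly p b = 0"
    using assms(1) unfolding algebraic_def by blast
  have "\<forall>i. coeff p i \<in> G L' 0"
    using p(1) E_G[of L' 0] Ints_subset_Rats by auto
  then have bE: "b \<in> EL_n L' 1" using p by (auto simp: alg_closure_C_def)
  define c where "c = L / L'"
  have bc: "bpow L' (c * x) = bpow L x" for x
    using assms(3) unfolding c_def bpow_def by (simp add: field_simps)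
  have "bpow L' c = b" using bc[of 1] assms(2) by (simp add: bpow_def)
  then have "bpow L' c \<in> F" using bE unfolding F_def EL_def by blast
  then have cF: "c \<in> F" unfolding F_def by (rule EL_Log)
  have c0: "c \<noteq> 0" using assms(3,4) unfolding c_def by simp
  have "EL_n L n \<subseteq> F" for n
  proof (rule EL_minimal[OF sf _ q])
    show "alg_closure_C F \<subseteq> F" unfolding F_def by (rule EL_alg)
    show "bpow L x \<in> F" if "x \<in> F" for x
    proof -
      have "c * x \<in> F" using sf cF that unfolding subfield_C_def by blast
      then have "bpow L' (c * x) \<in> F" unfolding F_def by (rule EL_bpow)
      then show ?thesis using bc by simp
    qed
    show "w \<in> F" if "bpow L w \<in> F" for w
    proof -
      have "bpow L' (c * w) \<in> F" using that bc by simp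
      then have "c * w \<in> F" unfolding F_def by (rule EL_Log)
      moreover have "inverse c \<in> F" using sf cF c0 unfolding subfield_C_def by blast
      ultimately have "inverse c * (c * w) \<in> F" using sf unfolding subfield_C_def by blast
      then show ?thesis using c0 by (simp add: field_simps)
    qed
  qed
  then show ?thesis unfolding F_def EL_def by blast
qed

theorem mainTheorem3:
  fixes b b' L L' :: complex
  assumes "algebraic b" and "b \<noteq> 0" and "b \<noteq> 1"
      and "algebraic b'" and "b' \<noteq> 0" and "b' \<noteq> 1"
      and "L \<noteq> 0" and "exp L = b"
      and "L' \<noteq> 0" and "exp L' = b'"
  shows "EL L = EL L'"
  using EL_sub[of b L L'] EL_sub[of b' L' L] assms by blast

end
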